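(* Let $I,J\subset\mathbb{R}$ be intervals, $f:I\times J\to I$, $f_\lambda(x)=f(x,\lambda)$, $\lambda_0\in J$, $f_0=f_{\lambda_0}$. Assume: (H1) $f$ is a $C^1$ family of $C^2$ interval maps; (H2) $f_0$ is not constant on any interval; (H3) $f_0$ has at most one of: (a) a non-hyperbolic fixed point or periodic orbit, which as $\lambda$ varies is a generic codimension-one period-doubling or saddle-node bifurcation; (b) one critical point which constitutes a tangency between stable and unstable manifolds of fixed points or periodic orbits, generic in that as $\lambda$ varies through $\lambda_0$ the critical point moves from one side of the periodic point to the other; (H4) for each $\lambda$, $x_\lambda$ is a repelling fixed point of $f_\lambda$, $x_0:=x_{\lambda_0}$, and $y$ is a homoclinic point to $x_0$ for $f_0$; (H5) the homoclinic orbit containing $y$ at $\lambda=\lambda_0$ contains only one critical point of $f_0$. If $f_0'(x_0)<0$, then $(y,\lambda_0)$ is not a chain explosion point.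
   Context: For a map $g$, an $\epsilon$-chain from $x$ to $y$ is a finite sequence $z_0=x,\dots,z_N=y$ with $|g(z_{n-1})-z_n|<\epsilon$; $x$ is chain recurrent if for every $\epsilon>0$ there is an $\epsilon$-chain from $x$ to itself with $N>0$. $(x,\lambda_0)$ is a chain explosion point if $x$ is chain recurrent for $f_{\lambda_0}$ but some neighborhood of $x$ contains no chain recurrent point of $f_\lambda$ for all $\lambda$ on one side of $\lambda_0$. For a repelling fixed point $x_0$ of $f_0$, a point $y$ in the unstable manifold of $x_0$ with $f_0^K(y)=x_0$ for some integer $K>0$ is a homoclinic point to $x_0$. A homoclinic orbit through $y$ is a sequence $(z_{-k})_{k\ge0}$ with $z_0=x_0$, $z_{-K}=y$ for some $K$, $f_0(z_{-k})=z_{-k+1}$ for all $k\ge1$, and $z_{-k}\to x_0$ as $k\to\infty$. *)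

theory Defs
  imports "HOL-Analysis.Analysis"
begin

definition C1_family_of_C2_maps :: "real set \<Rightarrow> real set \<Rightarrow> (real \<Rightarrow> real \<Rightarrow> real) \<Rightarrow> bool" where
  "C1_family_of_C2_maps I J f \<longleftrightarrow>
     (\<exists>fx fl.
        continuous_on (I \<times> J) (\<lambda>(x, l). fx x l) \<and>
        continuous_on (I \<times> J) (\<lambda>(x, l). fl x l) \<and>
        (\<forall>x\<in>I. \<forall>l\<in>J. ((\<lambda>(u, v). f u v) has_derivative (\<lambda>(h, k). fx x l * h + fl x l * k))
                           (at (x, l) within I \<times> J))) \<and>
     (\<forall>l\<in>J. \<exists>g1 g2.
        (\<forall>x\<in>I. ((\<lambda>u. f u l) has_real_derivative g1 x) (at x within I) \<and>
                 (g1 has_real_derivative g2 x) (at x within I)) \<and>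
        continuous_on I g2)"

definition nowhere_constant :: "real set \<Rightarrow> (real \<Rightarrow> real) \<Rightarrow> bool" where
  "nowhere_constant I g \<longleftrightarrow>
     (\<forall>a b. a < b \<and> {a..b} \<subseteq> I \<longrightarrow> \<not> (\<exists>c. \<forall>x\<in>{a..b}. g x = c))"

definition periodic_pt :: "(real \<Rightarrow> real) \<Rightarrow> nat \<Rightarrow> real \<Rightarrow> bool" where
  "periodic_pt g n p \<longleftrightarrow> 0 < n \<and> (g ^^ n) p = p \<and> (\<forall>k. 0 < k \<and> k < n \<longrightarrow> (g ^^ k) p \<noteq> p)"

definition orbit_of :: "(real \<Rightarrow> real) \<Rightarrow> nat \<Rightarrow> real \<Rightarrow> real set" where
  "orbit_of g n p = {(g ^^ k) p | k. k < n}"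

definition nonhyperbolic_periodic :: "real set \<Rightarrow> (real \<Rightarrow> real) \<Rightarrow> nat \<Rightarrow> real \<Rightarrow> bool" where
  "nonhyperbolic_periodic I g n p \<longleftrightarrow> p \<in> I \<and> periodic_pt g n p \<and>
     (\<exists>d. ((g ^^ n) has_real_derivative d) (at p within I) \<and> \<bar>d\<bar> = 1)"

definition repelling_periodic :: "real set \<Rightarrow> (real \<Rightarrow> real) \<Rightarrow> nat \<Rightarrow> real \<Rightarrow> bool" where
  "repelling_periodic I g n p \<longleftrightarrow> p \<in> I \<and> periodic_pt g n p \<and>
     (\<exists>d. ((g ^^ n) has_real_derivative d) (at p within I) \<and> \<bar>d\<bar> > 1)"

definition repelling_fixed :: "real set \<Rightarrow> (real \<Rightarrow> real) \<Rightarrow> real \<Rightarrow> bool" where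
  "repelling_fixed I g x \<longleftrightarrow> x \<in> I \<and> g x = x \<and>
     (\<exists>d. (g has_real_derivative d) (at x within I) \<and> \<bar>d\<bar> > 1)"

definition critical_point :: "real set \<Rightarrow> (real \<Rightarrow> real) \<Rightarrow> real \<Rightarrow> bool" where
  "critical_point I g c \<longleftrightarrow> c \<in> I \<and> (g has_real_derivative 0) (at c within I)"

definition unstable_manifold_fixed :: "real set \<Rightarrow> (real \<Rightarrow> real) \<Rightarrow> real \<Rightarrow> real set" where
  "unstable_manifold_fixed I g x0 =
     {y \<in> I. \<exists>w. w 0 = y \<and> (\<forall>k. w k \<in> I \<and> g (w (Suc k)) = w k) \<and> w \<longlonglongrightarrow> x0}"

text \<open>Unstable manifold of the periodic orbit of q (period n): points having a backward
  orbit in I accumulating (along one residue class mod n) on a point of the orbit.\<close>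
definition unstable_set_periodic :: "real set \<Rightarrow> (real \<Rightarrow> real) \<Rightarrow> nat \<Rightarrow> real \<Rightarrow> real set" where
  "unstable_set_periodic I g n q =
     {y \<in> I. \<exists>w. w 0 = y \<and> (\<forall>k. w k \<in> I \<and> g (w (Suc k)) = w k) \<and>
               (\<exists>i. (\<lambda>k. w (n * k + i)) \<longlonglongrightarrow> q)}"

definition homoclinic_point :: "real set \<Rightarrow> (real \<Rightarrow> real) \<Rightarrow> real \<Rightarrow> real \<Rightarrow> bool" where
  "homoclinic_point I g x0 y \<longleftrightarrow> repelling_fixed I g x0 \<and>
     y \<in> unstable_manifold_fixed I g x0 \<and> (\<exists>K>0. (g ^^ K) y = x0)"

text \<open>Homoclinic orbit through y: z k stands for z_{-k}.\<close>
definition homoclinic_orbit :: "real set \<Rightarrow> (real \<Rightarrow> real) \<Rightarrow> real \<Rightarrow> real \<Rightarrow> (nat \<Rightarrow> real) \<Rightarrow> bool" where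
  "homoclinic_orbit I g x0 y z \<longleftrightarrow>
     z 0 = x0 \<and> (\<exists>K. z K = y) \<and> (\<forall>k. z k \<in> I) \<and>
     (\<forall>k. g (z (Suc k)) = z k) \<and> z \<longlonglongrightarrow> x0"

text \<open>Critical point constituting a tangency between the unstable manifold of a (repelling)
  periodic orbit and the stable manifold (i.e. preimages) of a repelling periodic orbit.\<close>
definition tangency_critical :: "real set \<Rightarrow> (real \<Rightarrow> real) \<Rightarrow> real \<Rightarrow> bool" where
  "tangency_critical I g c \<longleftrightarrow> critical_point I g c \<and>
     (\<exists>n q. repelling_periodic I g n q \<and> c \<in> unstable_set_periodic I g n q) \<and>
     (\<exists>n p m. repelling_periodic I g n p \<and> (g ^^ m) c = p)"

definition generic_saddle_node ::
  "real set \<Rightarrow> real set \<Rightarrow> (real \<Rightarrow> real \<Rightarrow> real) \<Rightarrow> real \<Rightarrow> nat \<Rightarrow> real \<Rightarrow> bool" where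
  "generic_saddle_node I J f l0 n p \<longleftrightarrow>
     (\<exists>g1 d2 dl.
        (\<forall>x\<in>I. (((\<lambda>u. f u l0) ^^ n) has_real_derivative g1 x) (at x within I)) \<and>
        g1 p = 1 \<and> (g1 has_real_derivative d2) (at p within I) \<and> d2 \<noteq> 0 \<and>
        ((\<lambda>l. ((\<lambda>u. f u l) ^^ n) p) has_real_derivative dl) (at l0 within J) \<and> dl \<noteq> 0)"

definition generic_period_doubling ::
  "real set \<Rightarrow> real set \<Rightarrow> (real \<Rightarrow> real \<Rightarrow> real) \<Rightarrow> real \<Rightarrow> nat \<Rightarrow> real \<Rightarrow> bool" where
  "generic_period_doubling I J f l0 n p \<longleftrightarrow>
     (((\<lambda>u. f u l0) ^^ n) has_real_derivative (-1)) (at p within I) \<and>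
     (\<exists>\<delta>>0. \<exists>pp mu s.
        continuous_on ({l0 - \<delta><..<l0 + \<delta>} \<inter> J) pp \<and> pp l0 = p \<and> s \<in> {-1, 1::real} \<and>
        (\<forall>l\<in>{l0 - \<delta><..<l0 + \<delta>} \<inter> J.
            pp l \<in> I \<and> ((\<lambda>u. f u l) ^^ n) (pp l) = pp l \<and>
            (((\<lambda>u. f u l) ^^ n) has_real_derivative mu l) (at (pp l) within I) \<and>
            (l < l0 \<longrightarrow> s * (mu l + 1) > 0) \<and> (l0 < l \<longrightarrow> s * (mu l + 1) < 0))) \<and>
     (\<exists>g1 g2 d3.
        (\<forall>x\<in>I. (((\<lambda>u. f u l0) ^^ (2 * n)) has_real_derivative g1 x) (at x within I) \<and>
                 (g1 has_real_derivative g2 x) (at x within I)) \<and>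
        (g2 has_real_derivative d3) (at p within I) \<and> d3 \<noteq> 0)"

text \<open>Generic tangency: as lambda passes lambda0 the continued critical point (more precisely
  its image f_lambda^m(c_lambda), which equals p at lambda0) moves from one side of the
  continued periodic point p_lambda to the other.\<close>
definition generic_tangency ::
  "real set \<Rightarrow> real set \<Rightarrow> (real \<Rightarrow> real \<Rightarrow> real) \<Rightarrow> real \<Rightarrow> real \<Rightarrow> bool" where
  "generic_tangency I J f l0 c \<longleftrightarrow>
     (\<exists>n p m. repelling_periodic I (\<lambda>u. f u l0) n p \<and> ((\<lambda>u. f u l0) ^^ m) c = p \<and>
       (\<exists>\<delta>>0. \<exists>cc pp s.
          continuous_on ({l0 - \<delta><..<l0 + \<delta>} \<inter> J) cc \<and>
          continuous_on ({l0 - \<delta><..<l0 + \<delta>} \<inter> J) pp \<and>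
          cc l0 = c \<and> pp l0 = p \<and> s \<in> {-1, 1::real} \<and>
          (\<forall>l\<in>{l0 - \<delta><..<l0 + \<delta>} \<inter> J.
              critical_point I (\<lambda>u. f u l) (cc l) \<and>
              pp l \<in> I \<and> ((\<lambda>u. f u l) ^^ n) (pp l) = pp l \<and>
              (l < l0 \<longrightarrow> s * (((\<lambda>u. f u l) ^^ m) (cc l) - pp l) > 0) \<and>
              (l0 < l \<longrightarrow> s * (((\<lambda>u. f u l) ^^ m) (cc l) - pp l) < 0))))"

definition H3_condition :: "real set \<Rightarrow> real set \<Rightarrow> (real \<Rightarrow> real \<Rightarrow> real) \<Rightarrow> real \<Rightarrow> bool" where
  "H3_condition I J f l0 \<longleftrightarrow>
     (let g = (\<lambda>u. f u l0) in
       ((\<forall>n p. \<not> nonhyperbolic_periodic I g n p) \<or> (\<forall>c. \<not> tangency_critical I g c)) \<and>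
       (\<forall>n1 p1 n2 p2. nonhyperbolic_periodic I g n1 p1 \<and> nonhyperbolic_periodic I g n2 p2
            \<longrightarrow> orbit_of g n1 p1 = orbit_of g n2 p2) \<and>
       (\<forall>c1 c2. tangency_critical I g c1 \<and> tangency_critical I g c2 \<longrightarrow> c1 = c2) \<and>
       (\<forall>n p. nonhyperbolic_periodic I g n p \<longrightarrow>
            generic_saddle_node I J f l0 n p \<or> generic_period_doubling I J f l0 n p) \<and>
       (\<forall>c. tangency_critical I g c \<longrightarrow> generic_tangency I J f l0 c))"

definition chain_recurrent :: "real set \<Rightarrow> (real \<Rightarrow> real) \<Rightarrow> real \<Rightarrow> bool" where
  "chain_recurrent I g x \<longleftrightarrow> x \<in> I \<and>
     (\<forall>\<epsilon>>0. \<exists>N>0. \<exists>z::nat \<Rightarrow> real. z 0 = x \<and> z N = x \<and> (\<forall>n\<le>N. z n \<in> I) \<and>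
        (\<forall>n\<in>{1..N}. \<bar>g (z (n - 1)) - z n\<bar> < \<epsilon>))"

definition chain_explosion_point ::
  "real set \<Rightarrow> real set \<Rightarrow> (real \<Rightarrow> real \<Rightarrow> real) \<Rightarrow> real \<Rightarrow> real \<Rightarrow> bool" where
  "chain_explosion_point I J f x l0 \<longleftrightarrow>
     chain_recurrent I (\<lambda>u. f u l0) x \<and>
     (\<exists>U \<delta> s. open U \<and> x \<in> U \<and> \<delta> > 0 \<and> s \<in> {-1, 1::real} \<and>
        (\<forall>l. 0 < s * (l - l0) \<and> s * (l - l0) < \<delta> \<longrightarrow>
             l \<in> J \<and> (\<forall>w\<in>U. \<not> chain_recurrent I (\<lambda>u. f u l) w)))"

end

theory Submission
  imports Defs
begin

lemma iter_cont:
  assumes cont: "continuous_on (I \<times> J) (\<lambda>(u,v). f u v)" and maps: "\<forall>x\<in>I. \<forall>l\<in>J. f x l \<in> I"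
  shows "continuous_on (I \<times> J) (\<lambda>(x,l). ((\<lambda>u. f u l)^^n) x) \<and> (\<forall>x\<in>I. \<forall>l\<in>J. ((\<lambda>u. f u l)^^n) x \<in> I)"
proof (induction n)
  case 0
  show ?case by (simp add: continuous_on_fst split_def)
next
  case (Suc n)
  have eq: "(\<lambda>(x,l). ((\<lambda>u. f u l)^^Suc n) x) = (\<lambda>p. (\<lambda>(u,v). f u v) ((\<lambda>p. (((\<lambda>u. f u (snd p))^^n) (fst p), snd p)) p))"
    by (auto simp: split_def)
  have c1: "continuous_on (I \<times> J) (\<lambda>p. (((\<lambda>u. f u (snd p))^^n) (fst p), snd p))"
    using Suc.IH by (intro continuous_on_Pair) (auto simp: split_def intro: continuous_on_snd continuous_on_id)
  have im: "(\<lambda>p. (((\<lambda>u. f u (snd p))^^n) (fst p), snd p)) ` (I \<times> J) \<subseteq> I \<times> J"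
    using Suc.IH by auto
  have "continuous_on (I \<times> J) (\<lambda>(x,l). ((\<lambda>u. f u l)^^Suc n) x)"
    unfolding eq by (rule continuous_on_compose2[OF cont c1 im])
  moreover have "\<forall>x\<in>I. \<forall>l\<in>J. ((\<lambda>u. f u l)^^Suc n) x \<in> I"
    using Suc.IH maps by auto
  ultimately show ?case by blast
qed

lemma iter_cont1:
  fixes g :: "real \<Rightarrow> real"
  assumes "continuous_on I g" "g ` I \<subseteq> I"
  shows "continuous_on I (g^^m) \<and> (g^^m) ` I \<subseteq> I"
proof (induction m)
  case 0 then show ?case by (simp add: continuous_on_id)
next
  case (Suc m)
  have "continuous_on I (\<lambda>x. g ((g^^m) x))"
    using Suc assms by (intro continuous_on_compose2[OF assms(1)]) auto
  then show ?case using Suc assms by (auto simp: o_def)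
qed

lemma alt:
  fixes g :: "real \<Rightarrow> real"
  assumes "(g has_real_derivative d) (at x0 within I)" "d < 0" "g x0 = x0"
  shows "\<exists>r>0. \<forall>x\<in>I. x \<noteq> x0 \<and> \<bar>x - x0\<bar> < r \<longrightarrow> (g x - x0) * (x - x0) < 0"
proof -
  have "((\<lambda>y. (g y - g x0) / (y - x0)) \<longlongrightarrow> d) (at x0 within I)"
    using assms(1) by (simp add: has_field_derivative_iff)
  then have "eventually (\<lambda>y. (g y - g x0) / (y - x0) < 0) (at x0 within I)"
    using assms(2) by (rule order_tendstoD(2))
  then obtain r where r: "r > 0" "\<forall>x\<in>I. x \<noteq> x0 \<and> dist x x0 < r \<longrightarrow> (g x - g x0) / (x - x0) < 0"
    unfolding eventually_at by blast
  show ?thesis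
  proof (intro exI[of _ r] conjI ballI impI)
    fix x assume "x \<in> I" "x \<noteq> x0 \<and> \<bar>x - x0\<bar> < r"
    then have "(g x - x0) / (x - x0) < 0" using r assms(3) by (auto simp: dist_real_def)
    then show "(g x - x0) * (x - x0) < 0"
      by (simp add: divide_less_0_iff mult_less_0_iff)
  qed (use r in auto)
qed

lemma nc_iter:
  fixes g :: "real \<Rightarrow> real"
  assumes "continuous_on I g" "g ` I \<subseteq> I" "nowhere_constant I g"
  shows "nowhere_constant I (g^^m)"
proof (induction m)
  case 0 show ?case unfolding nowhere_constant_def
  proof (intro allI impI notI)
    fix a b :: real assume ab: "a < b \<and> {a..b} \<subseteq> I" and "\<exists>c. \<forall>x\<in>{a..b}. (g ^^ 0) x = c"
    then obtain c where "\<forall>x\<in>{a..b}. x = c" by auto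
    then have "a = c" "b = c" using ab by auto
    then show False using ab by simp
  qed
next
  case (Suc m)
  show ?case unfolding nowhere_constant_def
  proof (intro allI impI notI)
    fix a b assume ab: "a < b \<and> {a..b} \<subseteq> I" and "\<exists>c. \<forall>x\<in>{a..b}. (g ^^ Suc m) x = c"
    then obtain c where c0: "\<forall>x\<in>{a..b}. (g ^^ Suc m) x = c" by blast
    have c: "\<forall>x\<in>{a..b}. (g^^m) (g x) = c"
      using c0 by (simp add: funpow_swap1)
    from assms(3) ab obtain x1 x2 where x: "x1 \<in> {a..b}" "x2 \<in> {a..b}" "g x1 \<noteq> g x2"
      unfolding nowhere_constant_def by metis
    have "connected (g ` {a..b})"
      by (rule connected_continuous_image) (use assms(1) ab continuous_on_subset in auto)
    then have sub: "{min (g x1) (g x2)..max (g x1) (g x2)} \<subseteq> g ` {a..b}"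
      using x by (intro connected_contains_Icc) (auto simp: min_def max_def)
    have "min (g x1) (g x2) < max (g x1) (g x2)" using x(3) by (auto simp: min_def max_def)
    moreover have "{min (g x1) (g x2)..max (g x1) (g x2)} \<subseteq> I" using sub ab assms(2) by blast
    moreover have "\<forall>u\<in>{min (g x1) (g x2)..max (g x1) (g x2)}. (g^^m) u = c" using sub c by blast
    ultimately show False using Suc.IH unfolding nowhere_constant_def by blast
  qed
qed

lemma pickv:
  fixes g :: "real \<Rightarrow> real"
  assumes gc: "continuous_on I g" and gI: "g ` I \<subseteq> I"
    and z: "z 0 = x0" "z K = y" "\<forall>k. g (z (Suc k)) = z k" "z \<longlonglongrightarrow> x0"
    and r: "r > 0" "\<forall>x\<in>I. x \<noteq> x0 \<and> \<bar>x - x0\<bar> < r \<longrightarrow> (g x - x0) * (x - x0) < 0"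
    and zI: "\<forall>k. z k \<in> I"
    and yx: "y \<noteq> x0" and gx0: "g x0 = x0"
    and seg: "{min y p..max y p} \<subseteq> I" and pq: "(g^^K) p \<noteq> x0"
  shows "\<exists>k v. k > 0 \<and> v \<in> {min y p..max y p} \<and> v \<noteq> y \<and> (g^^k) v = y \<and> (g^^k) y = x0"
proof -
  have iter: "\<And>j k. (g^^j) (z (k + j)) = z k"
  proof -
    fix j k show "(g^^j) (z (k + j)) = z k"
    proof (induction j arbitrary: k)
      case 0 then show ?case by simp
    next
      case (Suc j)
      have "(g^^Suc j) (z (k + Suc j)) = (g^^j) (g (z (Suc (k + j))))"
        by (simp add: funpow_swap1)
      also have "\<dots> = (g^^j) (z (k + j))" using z(3) by simp
      finally show ?case using Suc.IH by simp
    qed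
  qed
  have gfix: "\<And>m. (g^^m) x0 = x0"
  proof -
    fix m show "(g^^m) x0 = x0"
      by (induction m) (use gx0 in auto)
  qed
  have Kpos: "K > 0" using z yx by (cases K) auto
  have zne: "\<And>k. k \<ge> K \<Longrightarrow> z k \<noteq> x0"
  proof
    fix k assume "k \<ge> K" "z k = x0"
    then have "(g^^(k-K)) (z (K + (k - K))) = z K" using iter by blast
    then show False using \<open>k \<ge> K\<close> \<open>z k = x0\<close> gfix z yx by simp
  qed
  define q where "q = (g^^K) p"
  have qx: "\<bar>q - x0\<bar> > 0" using pq q_def by simp
  obtain k1 where k1: "\<forall>k\<ge>k1. \<bar>z k - x0\<bar> < min r \<bar>q - x0\<bar>"
    using z(4) qx r(1) unfolding LIMSEQ_iff by (metis min_less_iff_conj real_norm_def)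
  define k0 where "k0 = max k1 K"
  have a1: "\<bar>z k0 - x0\<bar> < \<bar>q - x0\<bar>" "\<bar>z (Suc k0) - x0\<bar> < \<bar>q - x0\<bar>"
    using k1 k0_def by auto
  have "(g (z (Suc k0)) - x0) * (z (Suc k0) - x0) < 0"
    using r(2) zI zne[of "Suc k0"] k1 k0_def by auto
  then have prod: "(z k0 - x0) * (z (Suc k0) - x0) < 0" using z(3) by simp
  have "\<exists>k\<ge>k0. min x0 q < z k \<and> z k < max x0 q"
  proof (cases "min x0 q < z k0 \<and> z k0 < max x0 q")
    case True then show ?thesis by blast
  next
    case False
    then have "min x0 q < z (Suc k0) \<and> z (Suc k0) < max x0 q"
      using prod a1 by (auto simp: mult_less_0_iff min_def max_def abs_if split: if_splits)
    then show ?thesis by (intro exI[of _ "Suc k0"]) auto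
  qed
  then obtain k where k: "k \<ge> K" "min x0 q < z k" "z k < max x0 q" using k0_def by auto
  have gKy: "(g^^K) y = x0" using iter[of K 0] z by simp
  have cK: "continuous_on I (g^^K)" using iter_cont1[OF gc gI] by blast
  have "connected ((g^^K) ` {min y p..max y p})"
    by (rule connected_continuous_image) (use cK seg continuous_on_subset in auto)
  then have "{min x0 q..max x0 q} \<subseteq> (g^^K) ` {min y p..max y p}"
    using gKy q_def by (intro connected_contains_Icc) (auto simp: min_def max_def)
  moreover have "z k \<in> {min x0 q..max x0 q}" using k by auto
  ultimately have "z k \<in> (g^^K) ` {min y p..max y p}" by blast
  then obtain v where v: "v \<in> {min y p..max y p}" "(g^^K) v = z k" by (auto simp del: atLeastAtMost_iff)
  have "v \<noteq> y" using v gKy zne[OF k(1)] by auto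
  have "(g^^k) v = (g^^(k-K)) ((g^^K) v)"
    using k(1) by (metis funpow_add le_add_diff_inverse2 o_apply)
  also have "\<dots> = (g^^(k-K)) (z (K + (k - K)))" using v k by simp
  also have "\<dots> = y" using iter z by simp
  finally have gv: "(g^^k) v = y" .
  have "(g^^k) y = (g^^(k-K)) ((g^^K) y)"
    using k(1) by (metis funpow_add le_add_diff_inverse2 o_apply)
  then have gy: "(g^^k) y = x0" using gKy gfix by simp
  show ?thesis using v \<open>v \<noteq> y\<close> gv gy Kpos k(1)
    by (intro exI[of _ k] exI[of _ v]) auto
qed

lemma core:
  fixes g :: "real \<Rightarrow> real"
  assumes Iint: "is_interval I" "interior I \<noteq> {}"
    and gc: "continuous_on I g" and gI: "g ` I \<subseteq> I" and nc: "nowhere_constant I g"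
    and der: "(g has_real_derivative d) (at x0 within I)" "d < 0"
    and gx0: "g x0 = x0" and x0I: "x0 \<in> I"
    and z: "z 0 = x0" "z K = y" "\<forall>k. g (z (Suc k)) = z k" "z \<longlonglongrightarrow> x0"
    and zI: "\<forall>k. z k \<in> I"
    and e: "e > 0"
  shows "\<exists>n>0. \<exists>a b. a \<in> I \<and> b \<in> I \<and> \<bar>a - y\<bar> < e \<and> \<bar>b - y\<bar> < e \<and> (g^^n) a < a \<and> (g^^n) b > b"
proof -
  obtain r where r: "r > 0" "\<forall>x\<in>I. x \<noteq> x0 \<and> \<bar>x - x0\<bar> < r \<longrightarrow> (g x - x0) * (x - x0) < 0"
    using alt[OF der gx0] by blast
  have yI: "y \<in> I" using zI z by metis
  have ivl: "\<And>a b x. a \<in> I \<Longrightarrow> b \<in> I \<Longrightarrow> a \<le> x \<Longrightarrow> x \<le> b \<Longrightarrow> x \<in> I"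
    using Iint(1) unfolding is_interval_1 by blast
  show ?thesis
  proof (cases "y = x0")
    case True
    obtain w where "w \<in> interior I" using Iint(2) by blast
    then obtain t where t: "t > 0" "ball w t \<subseteq> I" using open_contains_ball_eq open_interior interior_subset
      by (metis subset_trans)
    have "w \<in> I" "w + t/2 \<in> I" using t by (auto simp: dist_real_def)
    then obtain q where q: "q \<in> I" "q \<noteq> x0" using t(1)
      by (metis add_cancel_left_right half_gt_zero_iff less_irrefl)
    obtain rho where rho: "rho > 0" "\<forall>x\<in>I. dist x x0 < rho \<longrightarrow> dist (g x) (g x0) < min e r"
      using gc x0I e r(1) unfolding continuous_on_iff by (metis min_less_iff_conj)
    define m where "m = min (min e r) rho"
    have m: "m > 0" "m \<le> e" "m \<le> r" "m \<le> rho" using rho r e by (auto simp: m_def)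
    obtain x where x: "x \<in> I" "x \<noteq> x0" "\<bar>x - x0\<bar> < m"
    proof (cases "q > x0")
      case True
      define x where "x = min q (x0 + m/2)"
      have "x \<in> I" using ivl[OF x0I q(1), of x] True m by (auto simp: x_def)
      moreover have "x \<noteq> x0" "\<bar>x - x0\<bar> < m" using True m by (auto simp: x_def)
      ultimately show ?thesis using that by blast
    next
      case False
      define x where "x = max q (x0 - m/2)"
      have "x \<in> I" using ivl[OF q(1) x0I, of x] False m by (auto simp: x_def)
      moreover have "x \<noteq> x0" "\<bar>x - x0\<bar> < m" using False q m by (auto simp: x_def)
      ultimately show ?thesis using that by blast
    qed
    define w where "w = g x"
    have p1: "(w - x0) * (x - x0) < 0" using r(2) x m w_def by auto
    have wI: "w \<in> I" using gI x w_def by auto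
    have wd: "\<bar>w - x0\<bar> < min e r" using rho(2) x m gx0 w_def by (auto simp: dist_real_def)
    have wne: "w \<noteq> x0" using p1 by auto
    have p2: "(g w - x0) * (w - x0) < 0" using r(2) wI wne wd by auto
    have xe: "\<bar>x - y\<bar> < e" "\<bar>w - y\<bar> < e" using x m wd True by auto
    show ?thesis
    proof (cases "x > x0")
      case True
      then have "w < x0" using p1 by (simp add: mult_less_0_iff)
      then have "g w > x0" using p2 by (simp add: mult_less_0_iff)
      show ?thesis
        by (intro exI[of _ 1] conjI exI[of _ x] exI[of _ w])
           (use x wI xe \<open>w < x0\<close> \<open>g w > x0\<close> True w_def in auto)
    next
      case False
      then have "x < x0" using x by simp
      then have "w > x0" using p1 by (simp add: mult_less_0_iff)
      then have "g w < x0" using p2 by (simp add: mult_less_0_iff)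
      show ?thesis
        by (intro exI[of _ 1] conjI exI[of _ w] exI[of _ x])
           (use x wI xe \<open>w > x0\<close> \<open>g w < x0\<close> \<open>x < x0\<close> w_def in auto)
    qed
  next
    case False
    have iter0: "(g^^K) y = x0"
    proof -
      have "\<And>j k. (g^^j) (z (k + j)) = z k"
      proof -
        fix j k show "(g^^j) (z (k + j)) = z k"
        proof (induction j arbitrary: k)
          case 0 then show ?case by simp
        next
          case (Suc j)
          have "(g^^Suc j) (z (k + Suc j)) = (g^^j) (g (z (Suc (k + j))))"
            by (simp add: funpow_swap1)
          also have "\<dots> = (g^^j) (z (k + j))" using z(3) by simp
          finally show ?case using Suc.IH by simp
        qed
      qed
      from this[of K 0] show ?thesis using z by simp
    qed
    have nK: "nowhere_constant I (g^^K)" by (rule nc_iter[OF gc gI nc])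
    show ?thesis
    proof (cases "y < x0")
      case True
      define e' where "e' = min e (x0 - y) / 2"
      have e': "e' > 0" "e' < e" "y + e' < x0" using True e by (auto simp: e'_def min_def field_simps)
      have segI: "{y..y+e'} \<subseteq> I" using ivl[OF yI x0I] e' by auto
      obtain p where p: "p \<in> {y..y+e'}" "(g^^K) p \<noteq> x0"
      proof (rule ccontr)
        assume "\<not> thesis"
        then have "\<forall>x\<in>{y..y+e'}. (g^^K) x = x0" using that by blast
        then show False using nK segI e' unfolding nowhere_constant_def
          by (metis less_add_same_cancel1)
      qed
      have mm: "{min y p..max y p} = {y..p}" using p by (auto simp: min_def max_def)
      have sp: "{min y p..max y p} \<subseteq> I" using segI p mm by auto
      obtain k v where kv: "k > 0" "v \<in> {y..p}" "v \<noteq> y" "(g^^k) v = y" "(g^^k) y = x0"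
        using pickv[OF gc gI z r zI False gx0 sp p(2)] mm by blast
      show ?thesis
        by (intro exI[of _ k] conjI exI[of _ v] exI[of _ y])
           (use kv p segI yI e' True in auto)
    next
      case False2: False
      then have True': "x0 < y" using False by simp
      define e' where "e' = min e (y - x0) / 2"
      have e': "e' > 0" "e' < e" "x0 < y - e'" using True' e by (auto simp: e'_def min_def field_simps)
      have segI: "{y-e'..y} \<subseteq> I" using ivl[OF x0I yI] e' by auto
      obtain p where p: "p \<in> {y-e'..y}" "(g^^K) p \<noteq> x0"
      proof (rule ccontr)
        assume "\<not> thesis"
        then have "\<forall>x\<in>{y-e'..y}. (g^^K) x = x0" using that by blast
        moreover have "y - e' < y" using e' by simp
        ultimately show False using nK segI unfolding nowhere_constant_def
          by blast
      qed
      have mm: "{min y p..max y p} = {p..y}" using p by (auto simp: min_def max_def)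
      have sp: "{min y p..max y p} \<subseteq> I" using segI p mm by auto
      obtain k v where kv: "k > 0" "v \<in> {p..y}" "v \<noteq> y" "(g^^k) v = y" "(g^^k) y = x0"
        using pickv[OF gc gI z r zI False gx0 sp p(2)] mm by blast
      show ?thesis
        by (intro exI[of _ k] conjI exI[of _ y] exI[of _ v])
           (use kv p segI yI e' True' in auto)
    qed
  qed
qed

theorem mainTheorem3:
  fixes I J :: "real set" and f :: "real \<Rightarrow> real \<Rightarrow> real" and l0 :: real
    and xs :: "real \<Rightarrow> real" and y :: real and z :: "nat \<Rightarrow> real" and d :: real
  assumes intI: "is_interval I" "interior I \<noteq> {}"
    and intJ: "is_interval J" "interior J \<noteq> {}"
    and maps: "\<forall>x\<in>I. \<forall>l\<in>J. f x l \<in> I"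
    and l0J: "l0 \<in> J"
    and H1: "C1_family_of_C2_maps I J f"
    and H2: "nowhere_constant I (\<lambda>x. f x l0)"
    and H3: "H3_condition I J f l0"
    and H4_fix: "\<forall>l\<in>J. repelling_fixed I (\<lambda>x. f x l) (xs l)"
    and H4_hom: "homoclinic_point I (\<lambda>x. f x l0) (xs l0) y"
    and H5_orb: "homoclinic_orbit I (\<lambda>x. f x l0) (xs l0) y z"
    and H5_crit: "\<exists>!c. c \<in> range z \<and> critical_point I (\<lambda>x. f x l0) c"
    and neg: "((\<lambda>x. f x l0) has_real_derivative d) (at (xs l0) within I)" "d < 0"
  shows "\<not> chain_explosion_point I J f y l0"
proof
  assume ce: "chain_explosion_point I J f y l0"
  define g where "g = (\<lambda>x. f x l0)"
  define x0 where "x0 = xs l0"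
  have x0: "x0 \<in> I" "g x0 = x0" using H4_fix l0J unfolding repelling_fixed_def x0_def g_def by auto
  obtain fx fl where fd: "\<forall>x\<in>I. \<forall>l\<in>J. ((\<lambda>(u, v). f u v) has_derivative (\<lambda>(h, k). fx x l * h + fl x l * k))
                           (at (x, l) within I \<times> J)"
    using H1 unfolding C1_family_of_C2_maps_def by blast
  have cont: "continuous_on (I \<times> J) (\<lambda>(u,v). f u v)"
    unfolding continuous_on_eq_continuous_within
    using fd has_derivative_continuous by fastforce
  have IC: "\<And>n. continuous_on (I \<times> J) (\<lambda>(x,l). ((\<lambda>u. f u l)^^n) x) \<and> (\<forall>x\<in>I. \<forall>l\<in>J. ((\<lambda>u. f u l)^^n) x \<in> I)"
    by (rule iter_cont[OF cont maps])
  have contx: "\<And>n l. l \<in> J \<Longrightarrow> continuous_on I ((\<lambda>u. f u l)^^n)"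
  proof -
    fix n l assume lJ: "l \<in> J"
    have "continuous_on I (\<lambda>x. (\<lambda>(x,l). ((\<lambda>u. f u l)^^n) x) (x, l))"
      by (rule continuous_on_compose2[OF conjunct1[OF IC[of n]]])
         (use lJ in \<open>auto intro!: continuous_intros\<close>)
    then show "continuous_on I ((\<lambda>u. f u l)^^n)" by simp
  qed
  have contl: "\<And>n a. a \<in> I \<Longrightarrow> continuous_on J (\<lambda>l. ((\<lambda>u. f u l)^^n) a)"
  proof -
    fix n a assume aI: "a \<in> I"
    have "continuous_on J (\<lambda>l. (\<lambda>(x,l). ((\<lambda>u. f u l)^^n) x) (a, l))"
      by (rule continuous_on_compose2[OF conjunct1[OF IC[of n]]])
         (use aI in \<open>auto intro!: continuous_intros\<close>)
    then show "continuous_on J (\<lambda>l. ((\<lambda>u. f u l)^^n) a)" by simp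
  qed
  have gc: "continuous_on I g" using contx[OF l0J, of 1] by (simp add: g_def)
  have gI: "g ` I \<subseteq> I" using maps l0J by (auto simp: g_def)
  obtain U \<delta> s where Ud: "open U" "y \<in> U" "\<delta> > 0" "s \<in> {-1, 1::real}"
    "\<forall>l. 0 < s * (l - l0) \<and> s * (l - l0) < \<delta> \<longrightarrow> l \<in> J \<and> (\<forall>w\<in>U. \<not> chain_recurrent I (\<lambda>u. f u l) w)"
    using ce unfolding chain_explosion_point_def by blast
  obtain e where e: "e > 0" "ball y e \<subseteq> U" using Ud(1,2) open_contains_ball by blast
  obtain K where zo: "z 0 = x0" "z K = y" "\<forall>k. z k \<in> I" "\<forall>k. g (z (Suc k)) = z k" "z \<longlonglongrightarrow> x0"
    using H5_orb unfolding homoclinic_orbit_def g_def x0_def by blast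
  have der: "(g has_real_derivative d) (at x0 within I)" using neg(1) by (simp add: g_def x0_def)
  obtain n a b where nab: "n > 0" "a \<in> I" "b \<in> I" "\<bar>a - y\<bar> < e" "\<bar>b - y\<bar> < e" "(g^^n) a < a" "(g^^n) b > b"
    using core[OF intI gc gI _ der neg(2) x0(2) x0(1) zo(1,2,4,5) zo(3) e(1)] H2 g_def by blast
  obtain d1 where d1: "d1 > 0" "\<forall>l\<in>J. dist l l0 < d1 \<longrightarrow> dist (((\<lambda>u. f u l)^^n) a) (((\<lambda>u. f u l0)^^n) a) < a - (g^^n) a"
    using contl[OF nab(2), of n] l0J nab(6) unfolding continuous_on_iff by (metis diff_gt_0_iff_gt)
  obtain d2 where d2: "d2 > 0" "\<forall>l\<in>J. dist l l0 < d2 \<longrightarrow> dist (((\<lambda>u. f u l)^^n) b) (((\<lambda>u. f u l0)^^n) b) < (g^^n) b - b"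
    using contl[OF nab(3), of n] l0J nab(7) unfolding continuous_on_iff by (metis diff_gt_0_iff_gt)
  define t where "t = min \<delta> (min d1 d2) / 2"
  have t: "t > 0" "t < \<delta>" "t < d1" "t < d2" using Ud(3) d1(1) d2(1) by (auto simp: t_def min_def)
  define l where "l = l0 + s * t"
  have ss: "s * s = 1" using Ud(4) by auto
  have slt: "s * (l - l0) = t" using ss by (simp add: l_def algebra_simps)
  have "l \<in> J" and noCR: "\<forall>w\<in>U. \<not> chain_recurrent I (\<lambda>u. f u l) w"
    using Ud(5) slt t by auto
  have dl: "dist l l0 < d1" "dist l l0 < d2" using Ud(4) t by (auto simp: l_def dist_real_def)
  define F where "F = ((\<lambda>u. f u l)^^n)"
  have Fa: "F a < a" using d1(2) \<open>l \<in> J\<close> dl(1) by (auto simp: F_def g_def dist_real_def)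
  have Fb: "F b > b" using d2(2) \<open>l \<in> J\<close> dl(2) by (auto simp: F_def g_def dist_real_def)
  have ivl: "{min a b..max a b} \<subseteq> I"
  proof
    fix x assume x: "x \<in> {min a b..max a b}"
    have mm: "min a b \<in> I" "max a b \<in> I" using nab(2,3) by (simp_all add: min_def max_def)
    show "x \<in> I" using intI(1) mm x unfolding is_interval_1 atLeastAtMost_iff by blast
  qed
  have hc: "continuous_on {min a b..max a b} (\<lambda>x. F x - x)"
    using contx[OF \<open>l \<in> J\<close>, of n] ivl unfolding F_def
    by (intro continuous_intros) (auto intro: continuous_on_subset)
  obtain p where p: "min a b \<le> p" "p \<le> max a b" "F p - p = 0"
  proof (cases "a \<le> b")
    case True
    then show ?thesis using IVT'[of "\<lambda>x. F x - x" a 0 b] hc Fa Fb that by (auto simp: min_def max_def)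
  next
    case False
    then show ?thesis using IVT2'[of "\<lambda>x. F x - x" a 0 b] hc Fa Fb that by (auto simp: min_def max_def)
  qed
  have pI: "p \<in> I" using ivl p by auto
  have "p \<in> ball y e" using p nab(4,5) by (auto simp: dist_real_def min_def max_def split: if_splits)
  then have pU: "p \<in> U" using e by blast
  have "chain_recurrent I (\<lambda>u. f u l) p"
    unfolding chain_recurrent_def
  proof (intro conjI pI allI impI)
    fix \<epsilon> :: real assume "\<epsilon> > 0"
    show "\<exists>N>0. \<exists>w::nat \<Rightarrow> real. w 0 = p \<and> w N = p \<and> (\<forall>j\<le>N. w j \<in> I) \<and>
        (\<forall>j\<in>{1..N}. \<bar>f (w (j - 1)) l - w j\<bar> < \<epsilon>)"
    proof (intro exI[of _ n] conjI exI[of _ "\<lambda>j. ((\<lambda>u. f u l)^^j) p"] allI impI ballI)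
      show "((\<lambda>u. f u l)^^n) p = p" using p(3) by (simp add: F_def)
      fix j assume "j \<in> {1..n}"
      then obtain i where "j = Suc i" by (cases j) auto
      then show "\<bar>f (((\<lambda>u. f u l)^^(j - 1)) p) l - ((\<lambda>u. f u l)^^j) p\<bar> < \<epsilon>"
        using \<open>\<epsilon> > 0\<close> by simp
    qed (use nab(1) pI IC \<open>l \<in> J\<close> in auto)
  qed
  then show False using noCR pU by blast
qed

end
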